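(* Let $M$ be a finitely presented $n$-parameter persistence module with minimal free resolution $(F_\bullet,p_\bullet)$ and fixed decomposition isomorphisms as described in the context. If $\vec b\in\xi_0(M)$ (a generator of $F_0$), then $\vec b$ generates a non-empty bar in $M^{\mathcal L_{\vec b}}$.
   Context: Modules are $\mathbb{R}^n$-graded modules over $P_n$ (monoid ring over a field of $([0,\infty)^n,+)$); $\xi_0(M)$ denotes the generators (with their grades) of $F_0$ in a minimal free resolution. For $\vec a\in\mathbb{R}^n$, $\mathcal L_{\vec a}$ is the line $t\mapsto\vec a+t\vec1$. For a positively sloped line $\mathcal L$ with order-preserving $\|\cdot\|_\infty$-isometric parametrization $\iota$, $M^{\mathcal L}=M\circ\iota$, and $F^{\mathcal L}_\bullet$ is the induced free resolution of $M^{\mathcal L}$ (pullback along $\iota$): generator $\vec a$ of $F_i$ corresponds to $\vec a^{\mathcal L}$ of grade $\iota^{-1}(\mathrm{push}_{\mathcal L}(\mathrm{gr}\,\vec a))$, where $\mathrm{push}_{\mathcal L}(\vec p)=\min\{\vec q\in\mathcal L:\vec q\ge\vec p\}$. For each $\mathcal L$ fix an isomorphism $\phi:M^{\mathcal L}\to\bigoplus_{j\in\mathcal J}\mathds 1^{I_j}$, $I_j=[b_j,d_j)$ (possibly empty), with $|\mathcal J|$ equal to the number of generators of $F_0$. The canonical resolution $F'_\bullet$ of $\bigoplus\mathds 1^{I_j}$ has $F'_0$ free on $\{b_j\}$, $F'_1$ free on $\{d_j:d_j\neq\infty\}$, $d_j\mapsto x^{d_j-b_j}b_j$; $\phi$ lifts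 to a chain map $\phi_\bullet:F^{\mathcal L}_\bullet\to F'_\bullet$. A generator $\vec b$ of $F_0$ generates the bar $I_j$ in $M^{\mathcal L}$ if $\mathrm{gr}(\vec b^{\mathcal L})=b_j$ and the coefficient of $b_j$ in $\phi_0(\vec b^{\mathcal L})$ is nonzero; a generator $\vec r$ of $F_1$ kills $I_j$ if $\mathrm{gr}(\vec r^{\mathcal L})=d_j$ and the coefficient of $d_j$ in $\phi_1(\vec r^{\mathcal L})$ is nonzero. The isomorphisms are fixed so that each bar is generated by a unique generator of $F^{\mathcal L}_0$ and killed by a unique generator of $F^{\mathcal L}_1$, and every generator of $F^{\mathcal L}_0$ generates some (possibly empty) bar. *)

theory Defs
  imports "HOL-Analysis.Analysis" "HOL-Library.Extended_Real"
begin

text \<open>Grades live in real^'n (n-parameter), ordered componentwise.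
  The line L_a is t maps to a + t*1; this parametrisation is order preserving and
  an isometry for the sup norm.\<close>

definition diag_line :: "real^'n \<Rightarrow> real \<Rightarrow> real^'n" where
  "diag_line a t = a + t *\<^sub>R 1"

definition line_of :: "real^'n \<Rightarrow> (real^'n) set" where
  "line_of a = range (diag_line a)"

definition push_line :: "real^'n \<Rightarrow> real^'n \<Rightarrow> real^'n" where
  "push_line a p = (LEAST q. q \<in> line_of a \<and> p \<le> q)"

definition line_grade :: "real^'n \<Rightarrow> real^'n \<Rightarrow> real" where
  "line_grade a p = (THE t. diag_line a t = push_line a p)"

text \<open>A chain complex of graded free modules F_0 <- F_1 <- F_2 <- ... over the monoid ring
  is given by generator sets gens i (for F_i), grades gr i g of the generators, and
  scalar matrices D i g h: the differential F_{i+1} -> F_i sends the generator g of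
  F_{i+1} to the sum over h of D i g h * x^(gr (i+1) g - gr i h) * h.
  The homogeneous part of F_i of grade a is the k-vector space with basis
  the generators g with gr i g <= a (coordinates x :: 'g => 'k), and the structure maps
  are the inclusions.\<close>

definition free_elem ::
  "(nat \<Rightarrow> 'g set) \<Rightarrow> (nat \<Rightarrow> 'g \<Rightarrow> 'a::ord) \<Rightarrow> nat \<Rightarrow> 'a \<Rightarrow> ('g \<Rightarrow> 'k::zero) \<Rightarrow> bool" where
  "free_elem gens gr i a x \<longleftrightarrow> (\<forall>g. x g \<noteq> 0 \<longrightarrow> g \<in> gens i \<and> gr i g \<le> a)"

definition dapply ::
  "(nat \<Rightarrow> 'g set) \<Rightarrow> (nat \<Rightarrow> 'g \<Rightarrow> 'g \<Rightarrow> 'k::comm_semiring_1) \<Rightarrow> nat \<Rightarrow> ('g \<Rightarrow> 'k) \<Rightarrow> ('g \<Rightarrow> 'k)" where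
  "dapply gens D i y = (\<lambda>h. \<Sum>g\<in>gens (Suc i). y g * D i g h)"

definition graded_free_complex ::
  "(nat \<Rightarrow> 'g set) \<Rightarrow> (nat \<Rightarrow> 'g \<Rightarrow> 'a::ord) \<Rightarrow> (nat \<Rightarrow> 'g \<Rightarrow> 'g \<Rightarrow> 'k::comm_semiring_1) \<Rightarrow> bool" where
  "graded_free_complex gens gr D \<longleftrightarrow>
     (\<forall>i. finite (gens i)) \<and>
     (\<forall>i g h. D i g h \<noteq> 0 \<longrightarrow> g \<in> gens (Suc i) \<and> h \<in> gens i \<and> gr i h \<le> gr (Suc i) g) \<and>
     (\<forall>i. \<forall>g\<in>gens (Suc (Suc i)). dapply gens D i (D (Suc i) g) = (\<lambda>_. 0))"

definition exact_in_positive_degrees ::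
  "(nat \<Rightarrow> 'g set) \<Rightarrow> (nat \<Rightarrow> 'g \<Rightarrow> 'a::ord) \<Rightarrow> (nat \<Rightarrow> 'g \<Rightarrow> 'g \<Rightarrow> 'k::comm_semiring_1) \<Rightarrow> bool" where
  "exact_in_positive_degrees gens gr D \<longleftrightarrow>
     (\<forall>i a x. free_elem gens gr (Suc i) a x \<and> dapply gens D i x = (\<lambda>_. 0) \<longrightarrow>
        (\<exists>y. free_elem gens gr (Suc (Suc i)) a y \<and> dapply gens D (Suc i) y = x))"

text \<open>minimality: all matrix entries lie in the maximal ideal, i.e. no nonzero entry
  between generators of equal grade\<close>
definition minimal_differentials ::
  "(nat \<Rightarrow> 'g set) \<Rightarrow> (nat \<Rightarrow> 'g \<Rightarrow> 'a) \<Rightarrow> (nat \<Rightarrow> 'g \<Rightarrow> 'g \<Rightarrow> 'k::zero) \<Rightarrow> bool" where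
  "minimal_differentials gens gr D \<longleftrightarrow> (\<forall>i g h. D i g h \<noteq> 0 \<longrightarrow> gr i h \<noteq> gr (Suc i) g)"

text \<open>A minimal free resolution (F_\<bullet>, p_\<bullet>) of the module M = coker(p_1 : F_1 -> F_0).\<close>
definition minimal_free_resolution ::
  "(nat \<Rightarrow> 'g set) \<Rightarrow> (nat \<Rightarrow> 'g \<Rightarrow> 'a::ord) \<Rightarrow> (nat \<Rightarrow> 'g \<Rightarrow> 'g \<Rightarrow> 'k::comm_semiring_1) \<Rightarrow> bool" where
  "minimal_free_resolution gens gr D \<longleftrightarrow>
     graded_free_complex gens gr D \<and> exact_in_positive_degrees gens gr D \<and>
     minimal_differentials gens gr D"

text \<open>On a line, lg i g is the grade of the pulled back generator g^L of F^L_i.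
  Bars I_j = [birth j, death j) for j in J (death may be infinite; empty if equal).
  The canonical resolution F' has F'_0 free on J (grade birth j), F'_1 free on the j with
  finite death (grade death j), d_j |-> x^(d_j - b_j) b_j.
  phi_0 : F^L_0 -> F'_0 is given by the matrix A (g^L |-> sum_j A g j x^(..) b_j),
  phi_1 : F^L_1 -> F'_1 by the matrix C (r^L |-> sum_j C r j x^(..) d_j).\<close>

definition phi0_apply :: "'g set \<Rightarrow> ('g \<Rightarrow> 'j \<Rightarrow> 'k::comm_semiring_1) \<Rightarrow> ('g \<Rightarrow> 'k) \<Rightarrow> ('j \<Rightarrow> 'k)" where
  "phi0_apply G0 A x = (\<lambda>j. \<Sum>g\<in>G0. x g * A g j)"

text \<open>The map induced by phi_0 on cokernels, M^L(t) -> (direct sum of 1^{I_j})(t), is an isomorphism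
  of vector spaces at every t.  Here M^L(t) = F^L_0(t)/im p^L_1(t), and
  F'_0(t)/im p'_1(t) has im p'_1(t) = the span of the b_j with death j <= t.\<close>
definition induces_coker_iso ::
  "(nat \<Rightarrow> 'g set) \<Rightarrow> (nat \<Rightarrow> 'g \<Rightarrow> real) \<Rightarrow> (nat \<Rightarrow> 'g \<Rightarrow> 'g \<Rightarrow> 'k::field) \<Rightarrow>
   'j set \<Rightarrow> ('j \<Rightarrow> real) \<Rightarrow> ('j \<Rightarrow> ereal) \<Rightarrow> ('g \<Rightarrow> 'j \<Rightarrow> 'k) \<Rightarrow> bool" where
  "induces_coker_iso gens lg D J birth death A \<longleftrightarrow>
     (\<forall>t::real.
        (\<forall>z. (\<forall>j. z j \<noteq> 0 \<longrightarrow> j \<in> J \<and> birth j \<le> t) \<longrightarrow>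
             (\<exists>x. free_elem gens lg 0 t x \<and>
                  (\<forall>j\<in>J. \<not> death j \<le> ereal t \<longrightarrow> phi0_apply (gens 0) A x j = z j))) \<and>
        (\<forall>x. free_elem gens lg 0 t x \<and>
             (\<forall>j\<in>J. \<not> death j \<le> ereal t \<longrightarrow> phi0_apply (gens 0) A x j = 0) \<longrightarrow>
             (\<exists>y. free_elem gens lg 1 t y \<and> dapply gens D 0 y = x)))"

text \<open>J indexes a barcode decomposition phi : M^L ~= (+)_j 1^{I_j} with |J| = number of generators
  of F_0, and (A, C) is a chain map phi_\<bullet> : F^L_\<bullet> -> F'_\<bullet> lifting phi.\<close>
definition lifted_bar_decomposition ::
  "(nat \<Rightarrow> 'g set) \<Rightarrow> (nat \<Rightarrow> 'g \<Rightarrow> real) \<Rightarrow> (nat \<Rightarrow> 'g \<Rightarrow> 'g \<Rightarrow> 'k::field) \<Rightarrow>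
   'j set \<Rightarrow> ('j \<Rightarrow> real) \<Rightarrow> ('j \<Rightarrow> ereal) \<Rightarrow> ('g \<Rightarrow> 'j \<Rightarrow> 'k) \<Rightarrow> ('g \<Rightarrow> 'j \<Rightarrow> 'k) \<Rightarrow> bool" where
  "lifted_bar_decomposition gens lg D J birth death A C \<longleftrightarrow>
     finite J \<and> card J = card (gens 0) \<and>
     (\<forall>j\<in>J. ereal (birth j) \<le> death j) \<and>
     (\<forall>g j. A g j \<noteq> 0 \<longrightarrow> g \<in> gens 0 \<and> j \<in> J \<and> birth j \<le> lg 0 g) \<and>
     (\<forall>r j. C r j \<noteq> 0 \<longrightarrow> r \<in> gens 1 \<and> j \<in> J \<and> death j \<le> ereal (lg 1 r)) \<and>
     (\<forall>r\<in>gens 1. \<forall>j\<in>J. (\<Sum>g\<in>gens 0. D 0 r g * A g j) = C r j) \<and>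
     (\<forall>s\<in>gens 2. \<forall>j\<in>J. (\<Sum>r\<in>gens 1. D 1 s r * C r j) = 0) \<and>
     induces_coker_iso gens lg D J birth death A"

definition generates_bar :: "(nat \<Rightarrow> 'g \<Rightarrow> real) \<Rightarrow> ('j \<Rightarrow> real) \<Rightarrow> ('g \<Rightarrow> 'j \<Rightarrow> 'k::zero) \<Rightarrow> 'g \<Rightarrow> 'j \<Rightarrow> bool" where
  "generates_bar lg birth A g j \<longleftrightarrow> lg 0 g = birth j \<and> A g j \<noteq> 0"

definition kills_bar :: "(nat \<Rightarrow> 'g \<Rightarrow> real) \<Rightarrow> ('j \<Rightarrow> ereal) \<Rightarrow> ('g \<Rightarrow> 'j \<Rightarrow> 'k::zero) \<Rightarrow> 'g \<Rightarrow> 'j \<Rightarrow> bool" where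
  "kills_bar lg death C r j \<longleftrightarrow> death j = ereal (lg 1 r) \<and> C r j \<noteq> 0"

definition normalized_decomposition ::
  "(nat \<Rightarrow> 'g set) \<Rightarrow> (nat \<Rightarrow> 'g \<Rightarrow> real) \<Rightarrow> 'j set \<Rightarrow> ('j \<Rightarrow> real) \<Rightarrow> ('j \<Rightarrow> ereal) \<Rightarrow>
   ('g \<Rightarrow> 'j \<Rightarrow> 'k::zero) \<Rightarrow> ('g \<Rightarrow> 'j \<Rightarrow> 'k) \<Rightarrow> bool" where
  "normalized_decomposition gens lg J birth death A C \<longleftrightarrow>
     (\<forall>j\<in>J. \<exists>!g. g \<in> gens 0 \<and> generates_bar lg birth A g j) \<and>
     (\<forall>j\<in>J. death j \<noteq> \<infinity> \<longrightarrow> (\<exists>!r. r \<in> gens 1 \<and> kills_bar lg death C r j)) \<and>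
     (\<forall>g\<in>gens 0. \<exists>j\<in>J. generates_bar lg birth A g j)"

end

theory Submission
  imports Defs
begin


lemma diag_nth: "diag_line a t $ i = a $ i + t"
  by (simp add: diag_line_def)

lemma diag_le: "diag_line a t \<le> diag_line a s \<longleftrightarrow> t \<le> s"
  by (simp add: less_eq_vec_def diag_nth)

lemma line_grade_eq:
  fixes a p :: "real^'n"
  shows "line_grade a p = Max (range (\<lambda>i. p $ i - a $ i))"
proof -
  define t0 where "t0 = Max (range (\<lambda>i. p $ i - a $ i))"
  have fin: "finite (range (\<lambda>i. p $ i - a $ i))" by simp
  have ge: "p $ i - a $ i \<le> t0" for i unfolding t0_def by (rule Max_ge[OF fin]) auto
  obtain i0 where i0: "t0 = p $ i0 - a $ i0"
  proof -
    have "t0 \<in> range (\<lambda>i. p $ i - a $ i)" unfolding t0_def by (rule Max_in[OF fin]) auto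
    then show ?thesis using that by blast
  qed
  have push: "push_line a p = diag_line a t0"
    unfolding push_line_def
  proof (rule Least_equality)
    show "diag_line a t0 \<in> line_of a \<and> p \<le> diag_line a t0"
      using ge by (auto simp: line_of_def less_eq_vec_def diag_nth algebra_simps)
  next
    fix y assume "y \<in> line_of a \<and> p \<le> y"
    then obtain s where y: "y = diag_line a s" and "p \<le> y" by (auto simp: line_of_def)
    then have "p $ i0 \<le> a $ i0 + s" by (simp add: less_eq_vec_def diag_nth)
    then have "t0 \<le> s" using i0 by simp
    then show "diag_line a t0 \<le> y" using y diag_le by blast
  qed
  have inj: "diag_line a t = diag_line a s \<Longrightarrow> t = s" for t s
    by (metis diag_le order_antisym order_refl)
  show ?thesis unfolding line_grade_def push t0_def[symmetric]
    using inj by (intro the_equality) auto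
qed


lemma line_grade_self: "line_grade (a::real^'n) a = 0"
  by (simp add: line_grade_eq)

lemma line_grade_pos:
  fixes a p :: "real^'n"
  assumes "a \<le> p" "a \<noteq> p"
  shows "line_grade a p > 0"
proof -
  obtain i where "a $ i \<noteq> p $ i" using assms(2) by (auto simp: vec_eq_iff)
  with assms(1) have "p $ i - a $ i > 0" by (auto simp: less_eq_vec_def order_le_less)
  moreover have "p $ i - a $ i \<le> Max (range (\<lambda>i. p $ i - a $ i))" by (rule Max_ge) auto
  ultimately show ?thesis unfolding line_grade_eq by linarith
qed

theorem mainTheorem15:
  fixes gens :: "nat \<Rightarrow> 'g set"
    and gr :: "nat \<Rightarrow> 'g \<Rightarrow> real^'n"
    and D :: "nat \<Rightarrow> 'g \<Rightarrow> 'g \<Rightarrow> 'k::field"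
    and J :: "'j set" and birth :: "'j \<Rightarrow> real" and death :: "'j \<Rightarrow> ereal"
    and A C :: "'g \<Rightarrow> 'j \<Rightarrow> 'k"
    and b :: 'g
  assumes res: "minimal_free_resolution gens gr D"
    and b: "b \<in> gens 0"
    and dec: "lifted_bar_decomposition gens (\<lambda>i g. line_grade (gr 0 b) (gr i g)) D J birth death A C"
    and norm: "normalized_decomposition gens (\<lambda>i g. line_grade (gr 0 b) (gr i g)) J birth death A C"
  shows "\<exists>j\<in>J. generates_bar (\<lambda>i g. line_grade (gr 0 b) (gr i g)) birth A b j
               \<and> ereal (birth j) < death j"
proof (rule ccontr)
  define lg where "lg = (\<lambda>i g. line_grade (gr 0 b) (gr i g))"
  assume neg: "\<not> ?thesis"
  have lgb: "lg 0 b = 0" by (simp add: lg_def line_grade_self)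
  have finJ: "finite J" and bd: "\<forall>j\<in>J. ereal (birth j) \<le> death j"
    and Asupp: "\<forall>g j. A g j \<noteq> 0 \<longrightarrow> g \<in> gens 0 \<and> j \<in> J \<and> birth j \<le> lg 0 g"
    and iso: "induces_coker_iso gens lg D J birth death A"
    using dec unfolding lifted_bar_decomposition_def lg_def by auto
  have cplx: "graded_free_complex gens gr D" and mini: "minimal_differentials gens gr D"
    using res unfolding minimal_free_resolution_def by auto
  have early: "birth j < 0" if "j \<in> J" "A b j \<noteq> 0" "\<not> death j \<le> ereal 0" for j
  proof -
    have "birth j \<le> 0" using Asupp that lgb by fastforce
    moreover have "birth j \<noteq> 0"
    proof
      assume "birth j = 0"
      then have "generates_bar (\<lambda>i g. line_grade (gr 0 b) (gr i g)) birth A b j"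
        using that lgb unfolding generates_bar_def lg_def by simp
      then have "\<not> ereal (birth j) < death j" using neg that by blast
      with bd that have "death j \<le> ereal (birth j)" by (simp add: not_less)
      with \<open>birth j = 0\<close> that show False by (simp add: zero_ereal_def)
    qed
    ultimately show ?thesis by simp
  qed
  define t' where "t' = Max (insert (-1) {birth j |j. j \<in> J \<and> birth j < 0})"
  have finB: "finite (insert (-1) {birth j |j. j \<in> J \<and> birth j < 0})" using finJ by simp
  have t'neg: "t' < 0"
    unfolding t'_def using finB by (subst Max_less_iff) auto
  have bt': "birth j \<le> t'" if "j \<in> J" "birth j < 0" for j
    unfolding t'_def using finB that by (intro Max_ge) auto
  define z where "z = (\<lambda>j. if j \<in> J \<and> birth j < 0 then A b j else 0)"
  have "\<forall>j. z j \<noteq> 0 \<longrightarrow> j \<in> J \<and> birth j \<le> t'"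
    using bt' by (auto simp: z_def split: if_splits)
  then obtain x' where x'f: "free_elem gens lg 0 t' x'"
    and x'z: "\<forall>j\<in>J. \<not> death j \<le> ereal t' \<longrightarrow> phi0_apply (gens 0) A x' j = z j"
    using iso unfolding induces_coker_iso_def by blast
  have x'b: "x' b = 0" using x'f lgb t'neg unfolding free_elem_def by force
  define x where "x = (\<lambda>g. (if g = b then 1 else 0) - x' g)"
  have xf: "free_elem gens lg 0 0 x"
    unfolding free_elem_def
  proof (intro allI impI)
    fix g assume "x g \<noteq> 0"
    show "g \<in> gens 0 \<and> lg 0 g \<le> 0"
    proof (cases "g = b")
      case True then show ?thesis using b lgb by simp
    next
      case False then have "x' g \<noteq> 0" using \<open>x g \<noteq> 0\<close> by (simp add: x_def)
      then show ?thesis using x'f t'neg unfolding free_elem_def by force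
    qed
  qed
  have phib: "phi0_apply (gens 0) A (\<lambda>g. if g = b then 1 else 0) j = A b j" for j
  proof -
    have "(\<Sum>g\<in>gens 0. (if g = b then 1 else 0) * A g j) = (\<Sum>g\<in>gens 0. if g = b then A g j else 0)"
      by (rule sum.cong) auto
    also have "\<dots> = A b j" using b cplx unfolding graded_free_complex_def by (simp add: sum.delta)
    finally show ?thesis unfolding phi0_apply_def .
  qed
  have "phi0_apply (gens 0) A x j = 0" if "j \<in> J" "\<not> death j \<le> ereal 0" for j
  proof -
    have dt': "\<not> death j \<le> ereal t'"
      using that t'neg by (metis ereal_less_eq(3) order_trans less_imp_le)
    have "phi0_apply (gens 0) A x j = phi0_apply (gens 0) A (\<lambda>g. if g = b then 1 else 0) j
        - phi0_apply (gens 0) A x' j"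
      unfolding phi0_apply_def x_def by (simp add: left_diff_distrib sum_subtractf)
    also have "\<dots> = A b j - z j" using phib x'z that dt' by simp
    also have "\<dots> = 0" using early[OF that(1) _ that(2)] that(1) by (auto simp: z_def)
    finally show ?thesis .
  qed
  then obtain y where yf: "free_elem gens lg 1 0 y" and yd: "dapply gens D 0 y = x"
    using iso xf unfolding induces_coker_iso_def by (metis zero_ereal_def)
  have "(\<Sum>r\<in>gens 1. y r * D 0 r b) = 1"
    using fun_cong[OF yd, of b] x'b unfolding dapply_def x_def by simp
  then obtain r where r: "r \<in> gens 1" "y r * D 0 r b \<noteq> 0"
    by (metis (no_types, lifting) one_neq_zero sum.neutral)
  have "lg 1 r \<le> 0" using yf r unfolding free_elem_def by auto
  moreover have "gr 0 b \<le> gr 1 r" "gr 0 b \<noteq> gr 1 r"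
    using r cplx mini unfolding graded_free_complex_def minimal_differentials_def
    by (metis One_nat_def mult_zero_right)+
  then have "lg 1 r > 0" unfolding lg_def by (rule line_grade_pos)
  ultimately show False by simp
qed

end
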